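(* For every $S\subseteq\mathbb{Z}^2$ and real $\alpha$, $\Theta(S,\alpha)=\vartheta(S,\alpha,0)$.
   Context: Graph $\mathbf{G}$ on $\mathbb{Z}^2$: each $p$ is adjacent to $p\pm(1,0)$, $p\pm(0,1)$, $p+(-1,1)$, $p+(1,-1)$; connectedness and paths refer to $\mathbf{G}$ (paths "in $S$" use only vertices of $S$). Triangles: for reals $a,b,c$, $L(a,b,c)=\{(x,y): -x\le a,\ -y\le b,\ x+y\le c\}$, $\mathrm{span}(L(a,b,c))=a+b+c$, $D(L(a,b,c),d)=L(a-d,b-d,c-d)$. For $E\subseteq\mathbb{Z}^2$, $\mathrm{span}(E,d)$ is the minimum of $\sum_{I\in\mathcal{I}}\mathrm{span}(I)$ over finite sets $\mathcal{I}$ of triangles with $E\subseteq\bigcup_{I\in\mathcal{I}}D(I,d)$, and $\mathrm{Span}(E)=\mathrm{span}(E,2)$. A triple $(C,A_1,A_2)$ of pairwise disjoint subsets of $S$ is a cut of $S$ with parameters $|C|,m$ if every path in $S$ from $A_1$ to $A_2$ passes through an element of $C$, and $m=\min_{j=1,2}\mathrm{Span}(A_j\cup C)$. The cut is connected if both $A_1\cup C$ and $A_2\cup C$ are connected. $\Theta(S,\alpha)$ is the smallest $k$ such that $S$ has a cut with parameters $k,m$ with $m>\alpha k$ ($\infty$ if none). $\vartheta(S,\alpha,\beta)$ is the smallest $k$ such that $S$ has a connected cut with parameters $k,m$ with $m>\alpha k+\beta$ ($\infty$ if none). *)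

theory Defs
  imports Complex_Main "HOL-Library.Extended_Real" "HOL-Library.Extended_Nat"
begin

type_synonym pt = "int \<times> int"

definition adjG :: "pt \<Rightarrow> pt \<Rightarrow> bool" where
  "adjG p q \<longleftrightarrow> (fst q - fst p, snd q - snd p) \<in>
     {(1,0), (-1,0), (0,1), (0,-1), (-1,1), (1,-1)}"

definition path_in :: "pt set \<Rightarrow> pt list \<Rightarrow> bool" where
  "path_in X ps \<longleftrightarrow> ps \<noteq> [] \<and> set ps \<subseteq> X \<and>
     (\<forall>i. Suc i < length ps \<longrightarrow> adjG (ps ! i) (ps ! Suc i))"

definition connectedG :: "pt set \<Rightarrow> bool" where
  "connectedG X \<longleftrightarrow> (\<forall>p\<in>X. \<forall>q\<in>X. \<exists>ps. path_in X ps \<and> hd ps = p \<and> last ps = q)"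

text \<open>Triangle L(a,b,c), as a subset of R^2.  A triangle is represented by its
  parameter triple (a,b,c); triangles are nonempty, i.e. a+b+c \<ge> 0, so the triple is
  determined by the set and span is well defined.\<close>
definition Ltri :: "real \<Rightarrow> real \<Rightarrow> real \<Rightarrow> (real \<times> real) set" where
  "Ltri a b c = {(x,y). - x \<le> a \<and> - y \<le> b \<and> x + y \<le> c}"

definition is_triangle :: "real \<times> real \<times> real \<Rightarrow> bool" where
  "is_triangle t \<longleftrightarrow> (case t of (a,b,c) \<Rightarrow> Ltri a b c \<noteq> {})"

definition tspan :: "real \<times> real \<times> real \<Rightarrow> real" where
  "tspan t = (case t of (a,b,c) \<Rightarrow> a + b + c)"

definition Dtri :: "real \<times> real \<times> real \<Rightarrow> real \<Rightarrow> (real \<times> real) set" where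
  "Dtri t d = (case t of (a,b,c) \<Rightarrow> Ltri (a - d) (b - d) (c - d))"

text \<open>span(E,d): minimum (infimum in the extended reals; \<infinity> if no finite cover exists)
  of total span over finite families of triangles whose d-shrinkings cover E.\<close>
definition span_d :: "pt set \<Rightarrow> real \<Rightarrow> ereal" where
  "span_d E d = Inf {ereal (\<Sum>t\<in>\<I>. tspan t) | \<I>. finite \<I> \<and> (\<forall>t\<in>\<I>. is_triangle t) \<and>
      (\<forall>p\<in>E. \<exists>t\<in>\<I>. (real_of_int (fst p), real_of_int (snd p)) \<in> Dtri t d)}"

definition Span :: "pt set \<Rightarrow> ereal" where
  "Span E = span_d E 2"

definition is_cut :: "pt set \<Rightarrow> pt set \<Rightarrow> pt set \<Rightarrow> pt set \<Rightarrow> bool" where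
  "is_cut S C A1 A2 \<longleftrightarrow> C \<subseteq> S \<and> A1 \<subseteq> S \<and> A2 \<subseteq> S \<and>
     C \<inter> A1 = {} \<and> C \<inter> A2 = {} \<and> A1 \<inter> A2 = {} \<and>
     (\<forall>ps. path_in S ps \<and> hd ps \<in> A1 \<and> last ps \<in> A2 \<longrightarrow> (\<exists>v\<in>set ps. v \<in> C))"

definition cut_params :: "pt set \<Rightarrow> pt set \<Rightarrow> pt set \<Rightarrow> pt set \<Rightarrow> nat \<Rightarrow> ereal \<Rightarrow> bool" where
  "cut_params S C A1 A2 k m \<longleftrightarrow> is_cut S C A1 A2 \<and> finite C \<and> card C = k \<and>
     m = min (Span (A1 \<union> C)) (Span (A2 \<union> C))"

definition Theta :: "pt set \<Rightarrow> real \<Rightarrow> enat" where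
  "Theta S \<alpha> = Inf {enat k | k. \<exists>C A1 A2 m. cut_params S C A1 A2 k m \<and>
                                      m > ereal (\<alpha> * real k)}"

definition vartheta :: "pt set \<Rightarrow> real \<Rightarrow> real \<Rightarrow> enat" where
  "vartheta S \<alpha> \<beta> = Inf {enat k | k. \<exists>C A1 A2 m. cut_params S C A1 A2 k m \<and>
       connectedG (A1 \<union> C) \<and> connectedG (A2 \<union> C) \<and> m > ereal (\<alpha> * real k + \<beta>)}"

end

theory Submission
  imports Defs
begin

lemma tri_nonneg: "is_triangle t \<Longrightarrow> tspan t \<ge> 0"
  by (cases t) (auto simp: is_triangle_def tspan_def Ltri_def)

lemma span_le:
  assumes "finite I" "\<forall>t\<in>I. is_triangle t"
    "\<forall>p\<in>E. \<exists>t\<in>I. (real_of_int (fst p), real_of_int (snd p)) \<in> Dtri t 2"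
  shows "Span E \<le> ereal (\<Sum>t\<in>I. tspan t)"
  unfolding Span_def span_d_def using assms by (intro Inf_lower) blast

lemma span_less:
  assumes "Span E < ereal r"
  obtains I where "finite I" "\<forall>t\<in>I. is_triangle t"
    "\<forall>p\<in>E. \<exists>t\<in>I. (real_of_int (fst p), real_of_int (snd p)) \<in> Dtri t 2"
    "(\<Sum>t\<in>I. tspan t) < r"
  using assms unfolding Span_def span_d_def Inf_less_iff by auto

lemma span_ge:
  assumes "\<And>I. finite I \<Longrightarrow> \<forall>t\<in>I. is_triangle t \<Longrightarrow>
    \<forall>p\<in>E. \<exists>t\<in>I. (real_of_int (fst p), real_of_int (snd p)) \<in> Dtri t 2 \<Longrightarrow> r \<le> (\<Sum>t\<in>I. tspan t)"
  shows "ereal r \<le> Span E"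
  unfolding Span_def span_d_def using assms by (intro Inf_greatest) auto

lemma span_mono: "E \<subseteq> F \<Longrightarrow> Span E \<le> Span F"
  unfolding Span_def span_d_def by (intro Inf_superset_mono) blast

lemma span_empty: "Span {} \<le> 0"
  using span_le[of "{}" "{}"] by (simp add: zero_ereal_def)

lemma span_single: "Span {p} \<ge> 6"
proof -
  have "ereal 6 \<le> Span {p}"
  proof (rule span_ge)
    fix I assume I: "finite I" "\<forall>t\<in>I. is_triangle t"
      "\<forall>q\<in>{p}. \<exists>t\<in>I. (real_of_int (fst q), real_of_int (snd q)) \<in> Dtri t 2"
    then obtain t where t: "t \<in> I" "(real_of_int (fst p), real_of_int (snd p)) \<in> Dtri t 2" by auto
    have "6 \<le> tspan t" using t(2) by (cases t) (auto simp: Dtri_def Ltri_def tspan_def)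
    also have "\<dots> \<le> (\<Sum>t\<in>I. tspan t)"
      using I t by (intro member_le_sum) (auto intro: tri_nonneg)
    finally show "6 \<le> (\<Sum>t\<in>I. tspan t)" .
  qed
  then show ?thesis by simp
qed

lemma span_sub:
  assumes "Span E \<le> ereal x" "Span F \<le> ereal y"
  shows "Span (E \<union> F) \<le> ereal (x + y)"
proof (rule ereal_le_epsilon2)
  fix e :: real assume e: "0 < e"
  have "ereal x < ereal (x + e/2)" using e by simp
  with assms(1) have "Span E < ereal (x + e/2)" by (rule order_le_less_trans)
  then obtain I where I: "finite I" "\<forall>t\<in>I. is_triangle t"
    "\<forall>p\<in>E. \<exists>t\<in>I. (real_of_int (fst p), real_of_int (snd p)) \<in> Dtri t 2"
    "(\<Sum>t\<in>I. tspan t) < x + e/2" by (rule span_less)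
  have "ereal y < ereal (y + e/2)" using e by simp
  with assms(2) have "Span F < ereal (y + e/2)" by (rule order_le_less_trans)
  then obtain J where J: "finite J" "\<forall>t\<in>J. is_triangle t"
    "\<forall>p\<in>F. \<exists>t\<in>J. (real_of_int (fst p), real_of_int (snd p)) \<in> Dtri t 2"
    "(\<Sum>t\<in>J. tspan t) < y + e/2" by (rule span_less)
  have sp: "Span (E \<union> F) \<le> ereal (\<Sum>t\<in>I \<union> J. tspan t)"
    using I J by (intro span_le) auto
  have su: "(\<Sum>t\<in>I \<union> J. tspan t) \<le> (\<Sum>t\<in>I. tspan t) + (\<Sum>t\<in>J. tspan t)"
  proof -
    have "(\<Sum>t\<in>I \<union> J. tspan t) = (\<Sum>t\<in>I. tspan t) + (\<Sum>t\<in>J. tspan t) - (\<Sum>t\<in>I \<inter> J. tspan t)"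
      using I J by (simp add: sum_Un)
    moreover have "(\<Sum>t\<in>I \<inter> J. tspan t) \<ge> 0" using I by (intro sum_nonneg) (auto intro: tri_nonneg)
    ultimately show ?thesis by linarith
  qed
  have "Span (E \<union> F) \<le> ereal ((\<Sum>t\<in>I. tspan t) + (\<Sum>t\<in>J. tspan t))"
    using sp su by (meson ereal_less_eq(3) order_trans)
  moreover have "ereal ((\<Sum>t\<in>I. tspan t) + (\<Sum>t\<in>J. tspan t)) \<le> ereal (x + y + e)" using I J by simp
  ultimately have "Span (E \<union> F) \<le> ereal (x + y + e)" by (rule order_trans)
  then show "Span (E \<union> F) \<le> ereal (x + y) + ereal e" by simp
qed


definition reach :: "pt set \<Rightarrow> pt \<Rightarrow> pt \<Rightarrow> bool" where
  "reach X p q \<longleftrightarrow> (\<exists>ps. path_in X ps \<and> hd ps = p \<and> last ps = q)"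

lemma conn_reach: "connectedG X \<longleftrightarrow> (\<forall>p\<in>X. \<forall>q\<in>X. reach X p q)"
  unfolding connectedG_def reach_def by simp

lemma adj_sym: "adjG p q \<Longrightarrow> adjG q p"
  unfolding adjG_def by auto

lemma path_single: "path_in X [x] \<longleftrightarrow> x \<in> X"
  unfolding path_in_def by auto

lemma path_cons2: "path_in X (x # y # ps) \<longleftrightarrow> x \<in> X \<and> adjG x y \<and> path_in X (y # ps)"
proof
  assume a: "path_in X (x # y # ps)"
  have "adjG x y" using a unfolding path_in_def by (metis length_Cons nth_Cons_0 nth_Cons_Suc zero_less_Suc Suc_less_eq)
  moreover have "path_in X (y # ps)" unfolding path_in_def
  proof (intro conjI allI impI)
    show "set (y#ps) \<subseteq> X" using a by (simp add: path_in_def)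
    fix i assume "Suc i < length (y # ps)"
    then show "adjG ((y # ps) ! i) ((y # ps) ! Suc i)" using a unfolding path_in_def
      by (metis Suc_less_eq length_Cons nth_Cons_Suc)
  qed simp
  ultimately show "x \<in> X \<and> adjG x y \<and> path_in X (y # ps)" using a unfolding path_in_def by auto
next
  assume a: "x \<in> X \<and> adjG x y \<and> path_in X (y # ps)"
  show "path_in X (x # y # ps)" unfolding path_in_def
  proof (intro conjI allI impI)
    show "set (x # y # ps) \<subseteq> X" using a unfolding path_in_def by auto
  next
    fix i assume i: "Suc i < length (x # y # ps)"
    show "adjG ((x # y # ps) ! i) ((x # y # ps) ! Suc i)"
    proof (cases i)
      case 0 then show ?thesis using a by simp
    next
      case (Suc j) then show ?thesis using a i unfolding path_in_def by auto
    qed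
  qed simp
qed

lemma path_in_mono: "path_in X ps \<Longrightarrow> X \<subseteq> Y \<Longrightarrow> path_in Y ps"
  unfolding path_in_def by auto

lemma reach_mono: "reach X p q \<Longrightarrow> X \<subseteq> Y \<Longrightarrow> reach Y p q"
  unfolding reach_def using path_in_mono by blast

lemma reach_mem: "reach X p q \<Longrightarrow> p \<in> X \<and> q \<in> X"
  unfolding reach_def path_in_def by (metis hd_in_set last_in_set subsetD)

lemma reach_refl: "p \<in> X \<Longrightarrow> reach X p p"
  unfolding reach_def by (rule exI[of _ "[p]"]) (simp add: path_single)

lemma reach_cons: "x \<in> X \<Longrightarrow> adjG x y \<Longrightarrow> reach X y q \<Longrightarrow> reach X x q"
proof -
  assume a: "x \<in> X" "adjG x y" "reach X y q"
  then obtain ps where ps: "path_in X ps" "hd ps = y" "last ps = q" unfolding reach_def by auto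
  then obtain ps' where "ps = y # ps'" unfolding path_in_def by (cases ps) auto
  then show ?thesis using a ps unfolding reach_def
    by (intro exI[of _ "x # ps"]) (auto simp: path_cons2)
qed

lemma path_reach_trans: "path_in X ps \<Longrightarrow> reach X (last ps) r \<Longrightarrow> reach X (hd ps) r"
proof (induction ps)
  case Nil then show ?case by (simp add: path_in_def)
next
  case (Cons x ps)
  show ?case
  proof (cases ps)
    case Nil then show ?thesis using Cons by simp
  next
    case (Cons y ps')
    then have "path_in X ps" "x \<in> X" "adjG x y" using Cons.prems(1) by (auto simp: path_cons2)
    moreover have "reach X (last ps) r" using Cons.prems(2) Cons by simp
    ultimately have "reach X y r" using Cons.IH \<open>ps = y # ps'\<close> by simp
    then show ?thesis using \<open>x \<in> X\<close> \<open>adjG x y\<close> reach_cons by simp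
  qed
qed

lemma reach_trans: "reach X p q \<Longrightarrow> reach X q r \<Longrightarrow> reach X p r"
  unfolding reach_def[of X p q] using path_reach_trans by blast

lemma path_reach_sym: "path_in X ps \<Longrightarrow> reach X (last ps) (hd ps)"
proof (induction ps)
  case Nil then show ?case by (simp add: path_in_def)
next
  case (Cons x ps)
  show ?case
  proof (cases ps)
    case Nil then show ?thesis using Cons by (simp add: reach_refl path_single)
  next
    case (Cons y ps')
    then have "path_in X ps" "x \<in> X" "adjG x y" using Cons.prems(1) by (auto simp: path_cons2)
    then have "reach X (last ps) y" using Cons.IH \<open>ps = y # ps'\<close> by simp
    moreover have "reach X y x" using \<open>path_in X ps\<close> \<open>ps = y # ps'\<close> \<open>x \<in> X\<close> \<open>adjG x y\<close>
      by (intro reach_cons[of y X x]) (auto simp: path_in_def adj_sym reach_refl)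
    ultimately show ?thesis using reach_trans Cons by simp
  qed
qed

lemma reach_sym: "reach X p q \<Longrightarrow> reach X q p"
  unfolding reach_def[of X p q] using path_reach_sym by blast

lemma reach_step: "reach X p q \<Longrightarrow> r \<in> X \<Longrightarrow> adjG q r \<Longrightarrow> reach X p r"
proof -
  assume a: "reach X p q" "r \<in> X" "adjG q r"
  have "reach X q r" using a reach_mem by (intro reach_cons[of q X r]) (auto intro: reach_refl)
  then show ?thesis using a reach_trans by blast
qed

lemma path_exit: "path_in S ps \<Longrightarrow> hd ps \<in> K \<Longrightarrow> last ps \<notin> K \<Longrightarrow>
   \<exists>v w. v \<in> set ps \<and> v \<in> K \<and> w \<notin> K \<and> w \<in> S \<and> adjG v w"
proof (induction ps)
  case Nil then show ?case by (simp add: path_in_def)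
next
  case (Cons x ps)
  show ?case
  proof (cases ps)
    case Nil then show ?thesis using Cons by simp
  next
    case (Cons y ps')
    then have h: "path_in S ps" "x \<in> S" "adjG x y" using Cons.prems(1) by (auto simp: path_cons2)
    show ?thesis
    proof (cases "y \<in> K")
      case True
      then have "\<exists>v w. v \<in> set ps \<and> v \<in> K \<and> w \<notin> K \<and> w \<in> S \<and> adjG v w"
        using Cons.IH h Cons.prems \<open>ps = y # ps'\<close> by simp
      then show ?thesis by auto
    next
      case False
      have "y \<in> S" using h \<open>ps = y # ps'\<close> by (simp add: path_in_def)
      then show ?thesis using h Cons.prems \<open>ps = y # ps'\<close> False
        by (intro exI[of _ x] exI[of _ y]) simp
    qed
  qed
qed

lemma path_toC:
  assumes B: "\<forall>v\<in>B. \<forall>w\<in>S - C. adjG v w \<longrightarrow> w \<in> B"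
  shows "path_in S ps \<Longrightarrow> hd ps \<in> B \<union> C \<Longrightarrow> last ps \<in> C \<Longrightarrow> \<exists>c\<in>C. reach (B \<union> C) (hd ps) c"
proof (induction ps)
  case Nil then show ?case by (simp add: path_in_def)
next
  case (Cons x ps)
  show ?case
  proof (cases "x \<in> C")
    case True then show ?thesis by (auto intro!: reach_refl)
  next
    case xC: False
    show ?thesis
    proof (cases ps)
      case Nil then show ?thesis using Cons xC by simp
    next
      case (Cons y ps')
      then have h: "path_in S ps" "x \<in> S" "adjG x y" using Cons.prems(1) by (auto simp: path_cons2)
      have xB: "x \<in> B" using xC Cons.prems by simp
      have yS: "y \<in> S" using h \<open>ps = y # ps'\<close> by (simp add: path_in_def)
      have yBC: "y \<in> B \<union> C" using B xB yS h by auto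
      then obtain c where "c \<in> C" "reach (B \<union> C) y c"
        using Cons.IH h Cons.prems \<open>ps = y # ps'\<close> by auto
      then show ?thesis using xB h reach_cons[of x "B \<union> C" y c] by auto
    qed
  qed
qed

lemma path_avoid: "path_in S ps \<Longrightarrow> (\<forall>v\<in>set ps. v \<notin> C) \<Longrightarrow> path_in (S - C) ps"
  unfolding path_in_def by auto


lemma piece_cut:
  assumes BS: "B \<subseteq> S - C" and CS: "C \<subseteq> S"
    and Bcl: "\<forall>v\<in>B. \<forall>w\<in>S - C. adjG v w \<longrightarrow> w \<in> B"
    and PX: "P \<subseteq> B \<union> C" and Pcl: "\<forall>v\<in>P. \<forall>w\<in>B \<union> C. adjG v w \<longrightarrow> w \<in> P"
  shows "is_cut S (P \<inter> C) (P - C) (S - P)"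
  unfolding is_cut_def
proof (intro conjI allI impI)
  fix ps assume a: "path_in S ps \<and> hd ps \<in> P - C \<and> last ps \<in> S - P"
  then obtain v w where vw: "v \<in> set ps" "v \<in> P" "w \<notin> P" "w \<in> S" "adjG v w"
    using path_exit[of S ps P] by auto
  show "\<exists>v\<in>set ps. v \<in> P \<inter> C"
  proof (cases "v \<in> C")
    case True then show ?thesis using vw by auto
  next
    case False
    then have "v \<in> B" using PX vw by auto
    then have "w \<in> B \<union> C" using Bcl vw by auto
    then have "w \<in> P" using Pcl vw by auto
    then show ?thesis using vw by auto
  qed
qed (use assms in auto)

definition minimal_cut :: "pt set \<Rightarrow> real \<Rightarrow> nat \<Rightarrow> bool" where
  "minimal_cut S \<alpha> k \<longleftrightarrow> (\<forall>C' A1' A2'. is_cut S C' A1' A2' \<and> finite C' \<and> card C' < k \<longrightarrow>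
     \<not> (min (Span (A1' \<union> C')) (Span (A2' \<union> C')) > ereal (\<alpha> * card C')))"

lemma side_conn:
  fixes \<alpha> :: real
  assumes conn: "connectedG S" and fin: "finite C" and Cne: "C \<noteq> {}" and CS: "C \<subseteq> S"
    and BS: "B \<subseteq> S - C" and B'S: "B' \<subseteq> S - C" and disj: "B \<inter> B' = {}"
    and Bcl: "\<forall>v\<in>B. \<forall>w\<in>S - C. adjG v w \<longrightarrow> w \<in> B"
    and al: "\<alpha> \<ge> 0"
    and hB: "Span (B \<union> C) > ereal (\<alpha> * card C)"
    and hB': "Span (B' \<union> C) > ereal (\<alpha> * card C)"
    and mini: "minimal_cut S \<alpha> (card C)"
  shows "connectedG (B \<union> C)"
proof (rule ccontr)
  define X where "X = B \<union> C"
  assume "\<not> connectedG (B \<union> C)"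
  then obtain p q where pq: "p \<in> X" "q \<in> X" "\<not> reach X p q"
    unfolding conn_reach X_def by auto
  have toC: "\<exists>c\<in>C. reach X x c" if x: "x \<in> X" for x
  proof -
    obtain c0 where c0: "c0 \<in> C" using Cne by auto
    have "x \<in> S" using x BS CS X_def by auto
    then obtain ps where ps: "path_in S ps" "hd ps = x" "last ps = c0"
      using conn c0 CS unfolding connectedG_def by blast
    show ?thesis using path_toC[OF Bcl ps(1)] ps x c0 X_def by auto
  qed
  define K where "K = {x\<in>X. reach X p x}"
  define L where "L = X - K"
  obtain c1 where c1: "c1 \<in> C" "reach X p c1" using toC[OF pq(1)] by blast
  obtain c2 where c2: "c2 \<in> C" "reach X q c2" using toC[OF pq(2)] by blast
  have c1K: "c1 \<in> K" using c1 X_def K_def by auto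
  have c2L: "c2 \<in> L"
  proof -
    have "c2 \<notin> K"
    proof
      assume "c2 \<in> K"
      then have "reach X p c2" by (simp add: K_def)
      then have "reach X p q" using c2 reach_sym reach_trans by blast
      then show False using pq by simp
    qed
    then show ?thesis using c2 X_def L_def by auto
  qed
  have Kcl: "\<forall>v\<in>K. \<forall>w\<in>B \<union> C. adjG v w \<longrightarrow> w \<in> K"
    using reach_step unfolding K_def X_def by blast
  have Lcl: "\<forall>v\<in>L. \<forall>w\<in>B \<union> C. adjG v w \<longrightarrow> w \<in> L"
  proof (intro ballI impI)
    fix v w assume a: "v \<in> L" "w \<in> B \<union> C" "adjG v w"
    show "w \<in> L"
    proof (rule ccontr)
      assume "w \<notin> L"
      then have "reach X p w" using a unfolding L_def K_def X_def by auto
      then have "reach X p v" using a adj_sym reach_step unfolding L_def by blast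
      then show False using a unfolding L_def K_def by auto
    qed
  qed
  have piece: "Span P \<le> ereal (\<alpha> * card (P \<inter> C))"
    if PX: "P \<subseteq> B \<union> C" and Pcl: "\<forall>v\<in>P. \<forall>w\<in>B \<union> C. adjG v w \<longrightarrow> w \<in> P"
      and cout: "c \<in> C" "c \<notin> P" for P c
  proof -
    have cut: "is_cut S (P \<inter> C) (P - C) (S - P)"
      using piece_cut[OF BS CS Bcl PX Pcl] .
    have fP: "finite (P \<inter> C)" using fin by simp
    have lt: "card (P \<inter> C) < card C"
      using cout fin by (intro psubset_card_mono) auto
    have nm: "\<not> (min (Span ((P - C) \<union> (P \<inter> C))) (Span ((S - P) \<union> (P \<inter> C))) > ereal (\<alpha> * card (P \<inter> C)))"
      using mini cut fP lt unfolding minimal_cut_def by blast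
    have "B' \<union> C \<subseteq> (S - P) \<union> (P \<inter> C)" using B'S CS PX disj by auto
    then have s1: "Span (B' \<union> C) \<le> Span ((S - P) \<union> (P \<inter> C))" by (rule span_mono)
    have "\<alpha> * card (P \<inter> C) \<le> \<alpha> * card C" using lt al by (intro mult_left_mono) auto
    then have "ereal (\<alpha> * card (P \<inter> C)) < Span ((S - P) \<union> (P \<inter> C))"
      using hB' s1 by (meson ereal_less_eq(3) order_le_less_trans order_less_le_trans)
    moreover have "(P - C) \<union> (P \<inter> C) = P" by auto
    ultimately show ?thesis using nm by (auto simp: not_less)
  qed
  have sK: "Span K \<le> ereal (\<alpha> * card (K \<inter> C))"
    using piece[OF _ Kcl, of c2] c2 c2L unfolding K_def L_def X_def by auto
  have sL: "Span L \<le> ereal (\<alpha> * card (L \<inter> C))"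
    using piece[OF _ Lcl, of c1] c1 c1K unfolding K_def L_def X_def by auto
  have "Span (K \<union> L) \<le> ereal (\<alpha> * card (K \<inter> C) + \<alpha> * card (L \<inter> C))"
    using span_sub[OF sK sL] .
  moreover have "K \<union> L = B \<union> C" unfolding K_def L_def X_def by auto
  moreover have "card (K \<inter> C) + card (L \<inter> C) = card C"
  proof -
    have "(K \<inter> C) \<union> (L \<inter> C) = C" unfolding K_def L_def X_def by auto
    moreover have "(K \<inter> C) \<inter> (L \<inter> C) = {}" unfolding L_def by auto
    ultimately show ?thesis using fin card_Un_disjoint[of "K \<inter> C" "L \<inter> C"] by auto
  qed
  then have "real (card (K \<inter> C)) + real (card (L \<inter> C)) = real (card C)" by (metis of_nat_add)
  ultimately have "Span (B \<union> C) \<le> ereal (\<alpha> * card C)"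
    by (simp add: distrib_left[symmetric])
  then show False using hB by simp
qed


lemma k0_false:
  assumes conn: "connectedG S" and cut: "is_cut S {} A1 A2"
    and m: "min (Span A1) (Span A2) > 0"
  shows False
proof -
  have "A1 \<noteq> {}" using m span_empty by (auto simp: min_def split: if_splits)
  moreover have "A2 \<noteq> {}" using m span_empty by (auto simp: min_def split: if_splits)
  ultimately obtain a1 a2 where a: "a1 \<in> A1" "a2 \<in> A2" by auto
  then have "a1 \<in> S" "a2 \<in> S" using cut unfolding is_cut_def by auto
  then obtain ps where "path_in S ps" "hd ps = a1" "last ps = a2"
    using conn unfolding connectedG_def by blast
  then show False using cut a unfolding is_cut_def by blast
qed

lemma span_single_gt: "r < 6 \<Longrightarrow> ereal r < Span {p}"
proof -
  assume "r < 6"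
  then have "ereal r < ereal 6" by simp
  moreover have "ereal 6 \<le> Span {p}" using span_single[of p] by simp
  ultimately show ?thesis by (rule order_less_le_trans)
qed

lemma conn_single: "connectedG {p}"
  unfolding conn_reach by (auto intro: reach_refl)

lemma vartheta_le:
  assumes "cut_params S C A1 A2 k m" "connectedG (A1 \<union> C)" "connectedG (A2 \<union> C)"
    "m > ereal (\<alpha> * real k + \<beta>)"
  shows "vartheta S \<alpha> \<beta> \<le> enat k"
  unfolding vartheta_def using assms by (intro Inf_lower) blast

theorem theorem3p3:
  fixes S :: "(int \<times> int) set" and \<alpha> :: real
  shows "Theta S \<alpha> = vartheta S \<alpha> 0"
proof (rule antisym)
  show "Theta S \<alpha> \<le> vartheta S \<alpha> 0"
    unfolding Theta_def vartheta_def by (intro Inf_superset_mono) (auto, blast)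
next
  define T where "T = {enat k | k. \<exists>C A1 A2 m. cut_params S C A1 A2 k m \<and>
                                      m > ereal (\<alpha> * real k)}"
  have TT: "Theta S \<alpha> = Inf T" unfolding Theta_def T_def ..
  show "vartheta S \<alpha> 0 \<le> Theta S \<alpha>"
  proof (cases "T = {}")
    case True then show ?thesis using TT by (simp add: Inf_enat_def)
  next
    case False
    then have "Inf T \<in> T" unfolding Inf_enat_def by (auto intro: LeastI)
    then obtain k C A1 A2 m where kT: "Theta S \<alpha> = enat k" and cp: "cut_params S C A1 A2 k m"
      and mk: "m > ereal (\<alpha> * real k)" using TT unfolding T_def by auto
    have mini: "minimal_cut S \<alpha> k"
      unfolding minimal_cut_def
    proof (intro allI impI notI)
      fix C' A1' A2'
      assume a: "is_cut S C' A1' A2' \<and> finite C' \<and> card C' < k"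
        and b: "ereal (\<alpha> * real (card C')) < min (Span (A1' \<union> C')) (Span (A2' \<union> C'))"
      then have "enat (card C') \<in> T" unfolding T_def cut_params_def by blast
      then have "Theta S \<alpha> \<le> enat (card C')" using TT by (simp add: Inf_lower)
      then show False using kT a by simp
    qed
    have cut: "is_cut S C A1 A2" and fin: "finite C" and kC: "card C = k"
      and mdef: "m = min (Span (A1 \<union> C)) (Span (A2 \<union> C))" using cp unfolding cut_params_def by auto
    show ?thesis
    proof (cases "connectedG S")
      case False
      then obtain p q where pq: "p \<in> S" "q \<in> S" "\<not> reach S p q" unfolding conn_reach by auto
      then have "p \<noteq> q" using reach_refl by blast
      have c: "is_cut S {} {p} {q}" using pq \<open>p \<noteq> q\<close> unfolding is_cut_def reach_def by auto
      have "ereal (\<alpha> * real 0 + 0) < min (Span ({p} \<union> {})) (Span ({q} \<union> {}))"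
        using span_single_gt[of 0 p] span_single_gt[of 0 q] by simp
      then have "vartheta S \<alpha> 0 \<le> enat 0"
        using c by (intro vartheta_le[of S "{}" "{p}" "{q}"]) (auto simp: cut_params_def conn_single)
      then show ?thesis by (simp add: zero_enat_def[symmetric])
    next
      case conn: True
      have Cne: "C \<noteq> {}"
      proof
        assume "C = {}"
        then have "k = 0" using kC by simp
        then show False using k0_false[OF conn] cut mk mdef \<open>C = {}\<close> by (simp add: zero_ereal_def[symmetric])
      qed
      then obtain c where c: "c \<in> C" by auto
      have CS: "C \<subseteq> S" using cut unfolding is_cut_def by auto
      show ?thesis
      proof (cases "\<alpha> < 0")
        case True
        have c1: "is_cut S {c} {} {}" using c CS unfolding is_cut_def by auto
        have "ereal (\<alpha> * real 1 + 0) < min (Span ({} \<union> {c})) (Span ({} \<union> {c}))"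
          using span_single_gt[of \<alpha> c] True by simp
        then have "vartheta S \<alpha> 0 \<le> enat 1"
          using c1 by (intro vartheta_le[of S "{c}" "{}" "{}"]) (auto simp: cut_params_def conn_single)
        moreover have "enat 1 \<le> enat k" using Cne fin kC card_gt_0_iff[of C] by simp
        ultimately show ?thesis using kT by (metis order_trans)
      next
        case False
        then have al: "\<alpha> \<ge> 0" by simp
        define R where "R = {x \<in> S - C. \<exists>a\<in>A1. reach (S - C) a x}"
        define B2 where "B2 = S - C - R"
        have A1S: "A1 \<subseteq> S - C" and A2S: "A2 \<subseteq> S - C"
          using cut unfolding is_cut_def by auto
        have A1R: "A1 \<subseteq> R" using A1S unfolding R_def by (auto intro: reach_refl)
        have A2B: "A2 \<subseteq> B2"
        proof
          fix x assume x: "x \<in> A2"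
          show "x \<in> B2"
          proof (rule ccontr)
            assume "x \<notin> B2"
            then obtain a where a: "a \<in> A1" "reach (S - C) a x" using x A2S unfolding B2_def R_def by auto
            then obtain ps where "path_in (S - C) ps" "hd ps = a" "last ps = x" unfolding reach_def by auto
            moreover then have "path_in S ps" using path_in_mono by blast
            ultimately show False using cut a x unfolding is_cut_def path_in_def by blast
          qed
        qed
        have Rcl: "\<forall>v\<in>R. \<forall>w\<in>S - C. adjG v w \<longrightarrow> w \<in> R"
          unfolding R_def using reach_step by blast
        have B2cl: "\<forall>v\<in>B2. \<forall>w\<in>S - C. adjG v w \<longrightarrow> w \<in> B2"
        proof (intro ballI impI)
          fix v w assume a: "v \<in> B2" "w \<in> S - C" "adjG v w"
          show "w \<in> B2"
          proof (rule ccontr)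
            assume "w \<notin> B2"
            then have "w \<in> R" using a B2_def by auto
            then have "v \<in> R" using a adj_sym reach_step unfolding R_def B2_def by blast
            then show False using a B2_def by auto
          qed
        qed
        have RS: "R \<subseteq> S - C" and B2S: "B2 \<subseteq> S - C" and disj: "R \<inter> B2 = {}"
          unfolding R_def B2_def by auto
        have newcut: "is_cut S C R B2"
          unfolding is_cut_def
        proof (intro conjI allI impI)
          fix ps assume a: "path_in S ps \<and> hd ps \<in> R \<and> last ps \<in> B2"
          show "\<exists>v\<in>set ps. v \<in> C"
          proof (rule ccontr)
            assume "\<not> (\<exists>v\<in>set ps. v \<in> C)"
            then have "path_in (S - C) ps" using a path_avoid by blast
            then have "reach (S - C) (hd ps) (last ps)" unfolding reach_def by blast
            moreover obtain a0 where "a0 \<in> A1" "reach (S - C) a0 (hd ps)" using a R_def by auto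
            ultimately have "last ps \<in> R" using a unfolding R_def B2_def using reach_trans by blast
            then show False using a B2_def by auto
          qed
        qed (use CS RS B2S disj in auto)
        have s1: "Span (R \<union> C) > ereal (\<alpha> * card C)"
        proof -
          have "Span (A1 \<union> C) \<le> Span (R \<union> C)" using A1R by (intro span_mono) auto
          moreover have "m \<le> Span (A1 \<union> C)" using mdef by simp
          ultimately show ?thesis using mk kC by (meson order_less_le_trans)
        qed
        have s2: "Span (B2 \<union> C) > ereal (\<alpha> * card C)"
        proof -
          have "Span (A2 \<union> C) \<le> Span (B2 \<union> C)" using A2B by (intro span_mono) auto
          moreover have "m \<le> Span (A2 \<union> C)" using mdef by simp
          ultimately show ?thesis using mk kC by (meson order_less_le_trans)
        qed
        have mini': "minimal_cut S \<alpha> (card C)" using mini kC by simp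
        have con1: "connectedG (R \<union> C)"
          using side_conn[OF conn fin Cne CS RS B2S disj Rcl al s1 s2 mini'] .
        have con2: "connectedG (B2 \<union> C)"
          using side_conn[OF conn fin Cne CS B2S RS _ B2cl al s2 s1 mini'] disj by auto
        have "ereal (\<alpha> * real k + 0) < min (Span (R \<union> C)) (Span (B2 \<union> C))"
          using s1 s2 kC by simp
        then have "vartheta S \<alpha> 0 \<le> enat k"
          using newcut fin kC con1 con2
          by (intro vartheta_le[of S C R B2 k]) (auto simp: cut_params_def)
        then show ?thesis using kT by simp
      qed
    qed
  qed
qed

end
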